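(* Let $V\subset\mathbb{R}^n$ be a singular irreducible central real algebraic variety. Then the ring $\mathcal{R}^0(V)$ of continuous rational functions on $V$ has the weak substitution property on points over $\mathbb{R}[V]$: every ring homomorphism $\mathbb{R}[V]\to\mathbb{R}$ admits one and only one extension to a ring homomorphism $\mathcal{R}^0(V)\to\mathbb{R}$.
   Context: $V$ is central if its non-singular points are dense in $V$ for the Euclidean topology. $\mathcal{R}^0(V)$ consists of the continuous functions $V\to\mathbb{R}$ whose restriction to some non-empty Zariski open subset of $V$ is regular. *)

theory Defs
  imports "HOL-Analysis.Analysis"
begin

inductive_set poly_fun :: "((real^'n) \<Rightarrow> real) set" where
  const: "(\<lambda>x. c) \<in> poly_fun"
| coord: "(\<lambda>x. x $ i) \<in> poly_fun"
| add: "p \<in> poly_fun \<Longrightarrow> q \<in> poly_fun \<Longrightarrow> (\<lambda>x. p x + q x) \<in> poly_fun"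
| mult: "p \<in> poly_fun \<Longrightarrow> q \<in> poly_fun \<Longrightarrow> (\<lambda>x. p x * q x) \<in> poly_fun"

definition zero_set :: "((real^'n) \<Rightarrow> real) set \<Rightarrow> (real^'n) set" where
  "zero_set F = {x. \<forall>f\<in>F. f x = 0}"

definition algebraic_set :: "(real^'n) set \<Rightarrow> bool" where
  "algebraic_set V \<longleftrightarrow> (\<exists>F. F \<subseteq> poly_fun \<and> V = zero_set F)"

definition irreducible_alg :: "(real^'n) set \<Rightarrow> bool" where
  "irreducible_alg V \<longleftrightarrow> algebraic_set V \<and> V \<noteq> {} \<and>
     (\<forall>A B. algebraic_set A \<longrightarrow> algebraic_set B \<longrightarrow> V = A \<union> B \<longrightarrow> V = A \<or> V = B)"

definition alg_dim :: "(real^'n) set \<Rightarrow> nat" where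
  "alg_dim V = Sup {k. \<exists>C :: nat \<Rightarrow> (real^'n) set.
      (\<forall>i\<le>k. irreducible_alg (C i)) \<and> (\<forall>i<k. C i \<subset> C (Suc i)) \<and> C k \<subseteq> V}"

definition vanishing_ideal :: "(real^'n) set \<Rightarrow> ((real^'n) \<Rightarrow> real) set" where
  "vanishing_ideal V = {f \<in> poly_fun. \<forall>x\<in>V. f x = 0}"

text \<open>Nonsingular point: the gradients at x of the polynomials vanishing on V
  span a space of dimension n - dim V (rank of the Jacobian of generators of I(V)).\<close>
definition nonsingular_point :: "(real^'n) set \<Rightarrow> real^'n \<Rightarrow> bool" where
  "nonsingular_point V x \<longleftrightarrow> x \<in> V \<and>
     dim {g :: real^'n. \<exists>f\<in>vanishing_ideal V. (f has_derivative (\<lambda>h. g \<bullet> h)) (at x)}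
       = CARD('n) - alg_dim V"

definition singular_variety :: "(real^'n) set \<Rightarrow> bool" where
  "singular_variety V \<longleftrightarrow> (\<exists>x\<in>V. \<not> nonsingular_point V x)"

definition central :: "(real^'n) set \<Rightarrow> bool" where
  "central V \<longleftrightarrow> V \<subseteq> closure {x. nonsingular_point V x}"

text \<open>Functions on V are represented extensionally: value 0 outside V.\<close>
definition restrictV :: "(real^'n) set \<Rightarrow> ((real^'n) \<Rightarrow> real) \<Rightarrow> ((real^'n) \<Rightarrow> real)" where
  "restrictV V f = (\<lambda>x. if x \<in> V then f x else 0)"

definition coord_ring :: "(real^'n) set \<Rightarrow> ((real^'n) \<Rightarrow> real) set" where
  "coord_ring V = {restrictV V p | p. p \<in> poly_fun}"

definition cont_rational :: "(real^'n) set \<Rightarrow> ((real^'n) \<Rightarrow> real) set" where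
  "cont_rational V = {f. continuous_on V f \<and> (\<forall>x. x \<notin> V \<longrightarrow> f x = 0) \<and>
     (\<exists>W p q. algebraic_set W \<and> V - W \<noteq> {} \<and> p \<in> poly_fun \<and> q \<in> poly_fun \<and>
        (\<forall>x\<in>V - W. q x \<noteq> 0 \<and> f x = p x / q x))}"

definition ring_hom_on :: "(real^'n) set \<Rightarrow> ((real^'n) \<Rightarrow> real) set \<Rightarrow> (((real^'n) \<Rightarrow> real) \<Rightarrow> real) \<Rightarrow> bool" where
  "ring_hom_on V A \<phi> \<longleftrightarrow>
     (\<forall>f\<in>A. \<forall>g\<in>A. \<phi> (\<lambda>x. f x + g x) = \<phi> f + \<phi> g \<and> \<phi> (\<lambda>x. f x * g x) = \<phi> f * \<phi> g) \<and>
     \<phi> (restrictV V (\<lambda>x. 1)) = 1"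

end

theory Submission
  imports Defs
begin

lemma real_hom_id:
  fixes k :: "real \<Rightarrow> real"
  assumes add: "\<And>c d. k (c + d) = k c + k d"
    and mul: "\<And>c d. k (c * d) = k c * k d"
    and one: "k 1 = 1"
  shows "k c = c"
proof -
  have k0: "k 0 = 0" using add[of 0 0] by simp
  have kneg: "k (- x) = - k x" for x using add[of x "-x"] k0 by simp
  have knat: "k (of_nat n) = of_nat n" for n
    by (induction n) (simp_all add: k0 add one)
  have kint: "k (of_int m) = of_int m" for m
  proof (cases "m \<ge> 0")
    case True then show ?thesis using knat[of "nat m"] by simp
  next
    case False
    then have "of_int m = - (of_nat (nat (- m)) :: real)" by simp
    then show ?thesis using knat[of "nat (-m)"] kneg False by simp
  qed
  have krat: "k r = r" if rq: "r \<in> \<rat>" for r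
  proof -
    obtain a b where b: "b > 0" and r: "r = of_int a / of_int b"
      using Rats_cases'[OF rq] by metis
    have rb: "r * of_int b = of_int a" using r b by simp
    have "k r * of_int b = k (r * of_int b)" using mul[of r "of_int b"] kint[of b] by simp
    also have "\<dots> = r * of_int b" using rb kint[of a] by simp
    finally show ?thesis using b by simp
  qed
  have knn: "k x \<ge> 0" if "x \<ge> 0" for x
  proof -
    have "x = sqrt x * sqrt x" using that by simp
    then have "k x = k (sqrt x) * k (sqrt x)" using mul by metis
    then show ?thesis by simp
  qed
  have kmono: "k x \<le> k y" if "x \<le> y" for x y
  proof -
    have "k y = k x + k (y - x)" using add[of x "y - x"] by simp
    then show ?thesis using knn[of "y - x"] that by simp
  qed
  show ?thesis
  proof (rule ccontr)
    assume ne: "k c \<noteq> c"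
    show False
    proof (cases "k c < c")
      case True
      then obtain r where r: "r \<in> \<rat>" "k c < r" "r < c" using Rats_dense_in_real by blast
      then show False using kmono[of r c] krat[OF r(1)] by simp
    next
      case False
      then have "c < k c" using ne by simp
      then obtain r where r: "r \<in> \<rat>" "c < r" "r < k c" using Rats_dense_in_real by blast
      then show False using kmono[of c r] krat[OF r(1)] by simp
    qed
  qed
qed

lemma cr_intro:
  assumes "continuous_on V f" "\<forall>x. x \<notin> V \<longrightarrow> f x = 0" "algebraic_set W" "V - W \<noteq> {}"
    "p \<in> poly_fun" "q \<in> poly_fun" "\<forall>x\<in>V - W. q x \<noteq> 0 \<and> f x = p x / q x"
  shows "f \<in> cont_rational V"
  unfolding cont_rational_def using assms by blast

lemma poly_cont: "p \<in> poly_fun \<Longrightarrow> continuous_on S p"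
  by (induction rule: poly_fun.induct) (auto intro!: continuous_intros)

lemma alg_empty: "algebraic_set ({} :: (real^'n) set)"
proof -
  have "zero_set {(\<lambda>x::real^'n. 1::real)} = {}" by (simp add: zero_set_def)
  moreover have "{(\<lambda>x::real^'n. 1::real)} \<subseteq> poly_fun" by (auto intro: poly_fun.const)
  ultimately show ?thesis unfolding algebraic_set_def by metis
qed

lemma alg_union:
  assumes "algebraic_set (A :: (real^'n) set)" "algebraic_set B"
  shows "algebraic_set (A \<union> B)"
proof -
  obtain F where F: "F \<subseteq> poly_fun" "A = zero_set F" using assms(1) algebraic_set_def by metis
  obtain G where G: "G \<subseteq> poly_fun" "B = zero_set G" using assms(2) algebraic_set_def by metis
  define H where "H = {(\<lambda>x. f x * g x) | f g. f \<in> F \<and> g \<in> G}"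
  have "H \<subseteq> poly_fun" using F G by (auto simp: H_def intro: poly_fun.mult)
  moreover have "A \<union> B = zero_set H"
  proof
    show "A \<union> B \<subseteq> zero_set H" using F G by (auto simp: H_def zero_set_def)
  next
    show "zero_set H \<subseteq> A \<union> B"
    proof
      fix x assume x: "x \<in> zero_set H"
      show "x \<in> A \<union> B"
      proof (rule ccontr)
        assume "x \<notin> A \<union> B"
        then obtain f g where "f \<in> F" "f x \<noteq> 0" "g \<in> G" "g x \<noteq> 0"
          using F G by (auto simp: zero_set_def)
        then have "(\<lambda>x. f x * g x) \<in> H" by (auto simp: H_def)
        then have "f x * g x = 0" using x by (auto simp: zero_set_def)
        then show False using \<open>f x \<noteq> 0\<close> \<open>g x \<noteq> 0\<close> by simp
      qed
    qed
  qed
  ultimately show ?thesis unfolding algebraic_set_def by metis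
qed

lemma alg_inter:
  assumes "algebraic_set (A :: (real^'n) set)" "algebraic_set B"
  shows "algebraic_set (A \<inter> B)"
proof -
  obtain F where F: "F \<subseteq> poly_fun" "A = zero_set F" using assms(1) algebraic_set_def by metis
  obtain G where G: "G \<subseteq> poly_fun" "B = zero_set G" using assms(2) algebraic_set_def by metis
  have "A \<inter> B = zero_set (F \<union> G)" using F G by (auto simp: zero_set_def)
  moreover have "F \<union> G \<subseteq> poly_fun" using F G by auto
  ultimately show ?thesis unfolding algebraic_set_def by metis
qed

lemma irr_diff:
  assumes irr: "irreducible_alg V" and W1: "algebraic_set W1" and W2: "algebraic_set W2"
    and n1: "V - W1 \<noteq> {}" and n2: "V - W2 \<noteq> {}"
  shows "V - (W1 \<union> W2) \<noteq> {}"
proof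
  assume e: "V - (W1 \<union> W2) = {}"
  have aV: "algebraic_set V" using irr irreducible_alg_def by blast
  have "V = (V \<inter> W1) \<union> (V \<inter> W2)" using e by blast
  then have "V = V \<inter> W1 \<or> V = V \<inter> W2"
    using irr alg_inter[OF aV W1] alg_inter[OF aV W2] unfolding irreducible_alg_def by blast
  then show False using n1 n2 by blast
qed

lemma cr_add:
  assumes irr: "irreducible_alg V" and f: "f \<in> cont_rational V" and g: "g \<in> cont_rational V"
  shows "(\<lambda>x. f x + g x) \<in> cont_rational V"
proof -
  obtain W1 p1 q1 where 1: "algebraic_set W1" "V - W1 \<noteq> {}" "p1 \<in> poly_fun" "q1 \<in> poly_fun"
      "\<forall>x\<in>V - W1. q1 x \<noteq> 0 \<and> f x = p1 x / q1 x"
    using f unfolding cont_rational_def by blast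
  obtain W2 p2 q2 where 2: "algebraic_set W2" "V - W2 \<noteq> {}" "p2 \<in> poly_fun" "q2 \<in> poly_fun"
      "\<forall>x\<in>V - W2. q2 x \<noteq> 0 \<and> g x = p2 x / q2 x"
    using g unfolding cont_rational_def by blast
  have P: "(\<lambda>x. p1 x * q2 x + p2 x * q1 x) \<in> poly_fun" using 1 2 by (intro poly_fun.intros)
  have Q: "(\<lambda>x. q1 x * q2 x) \<in> poly_fun" using 1 2 by (intro poly_fun.intros)
  have E: "\<forall>x\<in>V - (W1 \<union> W2). q1 x * q2 x \<noteq> 0 \<and> f x + g x = (p1 x * q2 x + p2 x * q1 x) / (q1 x * q2 x)"
    using 1(5) 2(5) by (auto simp: field_simps)
  have C: "continuous_on V (\<lambda>x. f x + g x)" using f g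
    by (auto simp: cont_rational_def intro!: continuous_intros)
  have Z: "\<forall>x. x \<notin> V \<longrightarrow> f x = 0" "\<forall>x. x \<notin> V \<longrightarrow> g x = 0"
    using f g by (auto simp: cont_rational_def)
  show ?thesis using Z
    by (intro cr_intro[OF C _ alg_union[OF 1(1) 2(1)] irr_diff[OF irr 1(1) 2(1) 1(2) 2(2)] P Q E]) auto
qed

lemma cr_mul:
  assumes irr: "irreducible_alg V" and f: "f \<in> cont_rational V" and g: "g \<in> cont_rational V"
  shows "(\<lambda>x. f x * g x) \<in> cont_rational V"
proof -
  obtain W1 p1 q1 where 1: "algebraic_set W1" "V - W1 \<noteq> {}" "p1 \<in> poly_fun" "q1 \<in> poly_fun"
      "\<forall>x\<in>V - W1. q1 x \<noteq> 0 \<and> f x = p1 x / q1 x"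
    using f unfolding cont_rational_def by blast
  obtain W2 p2 q2 where 2: "algebraic_set W2" "V - W2 \<noteq> {}" "p2 \<in> poly_fun" "q2 \<in> poly_fun"
      "\<forall>x\<in>V - W2. q2 x \<noteq> 0 \<and> g x = p2 x / q2 x"
    using g unfolding cont_rational_def by blast
  have P: "(\<lambda>x. p1 x * p2 x) \<in> poly_fun" using 1 2 by (intro poly_fun.intros)
  have Q: "(\<lambda>x. q1 x * q2 x) \<in> poly_fun" using 1 2 by (intro poly_fun.intros)
  have E: "\<forall>x\<in>V - (W1 \<union> W2). q1 x * q2 x \<noteq> 0 \<and> f x * g x = (p1 x * p2 x) / (q1 x * q2 x)"
    using 1(5) 2(5) by (auto simp: field_simps)
  have C: "continuous_on V (\<lambda>x. f x * g x)" using f g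
    by (auto simp: cont_rational_def intro!: continuous_intros)
  have Z: "\<forall>x. x \<notin> V \<longrightarrow> f x = 0" "\<forall>x. x \<notin> V \<longrightarrow> g x = 0"
    using f g by (auto simp: cont_rational_def)
  show ?thesis using Z
    by (intro cr_intro[OF C _ alg_union[OF 1(1) 2(1)] irr_diff[OF irr 1(1) 2(1) 1(2) 2(2)] P Q E]) auto
qed

lemma cr_inv:
  assumes g: "g \<in> cont_rational V" and nz: "\<And>x. x \<in> V \<Longrightarrow> g x \<noteq> 0"
  shows "(\<lambda>x. if x \<in> V then 1 / g x else 0) \<in> cont_rational V"
proof -
  obtain W p q where 1: "algebraic_set W" "V - W \<noteq> {}" "p \<in> poly_fun" "q \<in> poly_fun"
      "\<forall>x\<in>V - W. q x \<noteq> 0 \<and> g x = p x / q x"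
    using g unfolding cont_rational_def by blast
  have E: "\<forall>x\<in>V - W. p x \<noteq> 0 \<and> (if x \<in> V then 1 / g x else 0) = q x / p x"
  proof
    fix x assume x: "x \<in> V - W"
    have qx: "q x \<noteq> 0 \<and> g x = p x / q x" using 1(5) x by blast
    have gx: "g x \<noteq> 0" using nz x by blast
    have "p x \<noteq> 0"
    proof
      assume "p x = 0" then have "g x = 0" using qx by simp
      then show False using gx by simp
    qed
    then show "p x \<noteq> 0 \<and> (if x \<in> V then 1 / g x else 0) = q x / p x" using x qx by auto
  qed
  have C: "continuous_on V (\<lambda>x. if x \<in> V then 1 / g x else 0)"
  proof -
    have "continuous_on V (\<lambda>x. 1 / g x)" using g nz
      by (auto simp: cont_rational_def intro!: continuous_intros)
    then show ?thesis by (rule continuous_on_cong[THEN iffD1, rotated 2]) auto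
  qed
  show ?thesis by (rule cr_intro[OF C _ 1(1) 1(2) 1(4) 1(3) E]) auto
qed

lemma coord_cr:
  assumes "p \<in> poly_fun" "V \<noteq> {}"
  shows "restrictV V p \<in> cont_rational V"
proof -
  have c: "continuous_on V (restrictV V p)"
    using poly_cont[OF assms(1), of V] by (rule continuous_on_cong[THEN iffD1, rotated 2]) (auto simp: restrictV_def)
  have O: "(\<lambda>x. 1) \<in> poly_fun" by (rule poly_fun.const)
  have E: "\<forall>x\<in>V - {}. (1::real) \<noteq> 0 \<and> restrictV V p x = p x / 1" by (simp add: restrictV_def)
  show ?thesis by (rule cr_intro[OF c _ alg_empty _ assms(1) O E]) (use assms in \<open>auto simp: restrictV_def\<close>)
qed

lemma poly_sum: "finite S \<Longrightarrow> (\<And>i. i \<in> S \<Longrightarrow> h i \<in> poly_fun) \<Longrightarrow> (\<lambda>x. \<Sum>i\<in>S. h i x) \<in> poly_fun"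
proof (induction S rule: finite_induct)
  case empty then show ?case using poly_fun.const[of 0] by simp
next
  case (insert j S)
  have "(\<lambda>x. h j x + (\<Sum>i\<in>S. h i x)) \<in> poly_fun" using insert by (intro poly_fun.add) auto
  then show ?case using insert by simp
qed

lemma point_of_hom:
  fixes V :: "(real^'n) set" and \<phi> :: "((real^'n) \<Rightarrow> real) \<Rightarrow> real"
  assumes alg: "algebraic_set V" and hom: "ring_hom_on V (coord_ring V) \<phi>"
  obtains a where "a \<in> V" "\<And>p. p \<in> poly_fun \<Longrightarrow> \<phi> (restrictV V p) = p a"
proof -
  have inC: "restrictV V p \<in> coord_ring V" if "p \<in> poly_fun" for p
    using that by (auto simp: coord_ring_def)
  have Radd: "(\<lambda>x. restrictV V p x + restrictV V q x) = restrictV V (\<lambda>x. p x + q x)" for p q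
    by (auto simp: restrictV_def)
  have Rmul: "(\<lambda>x. restrictV V p x * restrictV V q x) = restrictV V (\<lambda>x. p x * q x)" for p q
    by (auto simp: restrictV_def)
  have hadd: "\<phi> (restrictV V (\<lambda>x. p x + q x)) = \<phi> (restrictV V p) + \<phi> (restrictV V q)"
    if "p \<in> poly_fun" "q \<in> poly_fun" for p q
  proof -
    have "\<phi> (\<lambda>x. restrictV V p x + restrictV V q x) = \<phi> (restrictV V p) + \<phi> (restrictV V q)"
      using hom inC[OF that(1)] inC[OF that(2)] unfolding ring_hom_on_def by blast
    then show ?thesis by (simp only: Radd)
  qed
  have hmul: "\<phi> (restrictV V (\<lambda>x. p x * q x)) = \<phi> (restrictV V p) * \<phi> (restrictV V q)"
    if "p \<in> poly_fun" "q \<in> poly_fun" for p q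
  proof -
    have "\<phi> (\<lambda>x. restrictV V p x * restrictV V q x) = \<phi> (restrictV V p) * \<phi> (restrictV V q)"
      using hom inC[OF that(1)] inC[OF that(2)] unfolding ring_hom_on_def by blast
    then show ?thesis by (simp only: Rmul)
  qed
  have kc: "\<phi> (restrictV V (\<lambda>x. c)) = c" for c
  proof (rule real_hom_id[where k = "\<lambda>c. \<phi> (restrictV V (\<lambda>x. c))"])
    show "\<phi> (restrictV V (\<lambda>x. c + d)) = \<phi> (restrictV V (\<lambda>x. c)) + \<phi> (restrictV V (\<lambda>x. d))" for c d
      using hadd[of "\<lambda>x. c" "\<lambda>x. d"] poly_fun.const by blast
    show "\<phi> (restrictV V (\<lambda>x. c * d)) = \<phi> (restrictV V (\<lambda>x. c)) * \<phi> (restrictV V (\<lambda>x. d))" for c d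
      using hmul[of "\<lambda>x. c" "\<lambda>x. d"] poly_fun.const by blast
    show "\<phi> (restrictV V (\<lambda>x. 1)) = 1" using hom unfolding ring_hom_on_def by blast
  qed
  define a where "a = (\<chi> i. \<phi> (restrictV V (\<lambda>x. x $ i)))"
  have ev: "\<phi> (restrictV V p) = p a" if "p \<in> poly_fun" for p
    using that
  proof (induction rule: poly_fun.induct)
    case (const c) then show ?case using kc by simp
  next
    case (coord i) then show ?case by (simp add: a_def)
  next
    case (add p q) then show ?case using hadd by simp
  next
    case (mult p q) then show ?case using hmul by simp
  qed
  obtain F where F: "F \<subseteq> poly_fun" "V = zero_set F" using alg algebraic_set_def by metis
  have "a \<in> zero_set F"
    unfolding zero_set_def
  proof (intro CollectI ballI)
    fix f assume fF: "f \<in> F"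
    have "restrictV V f = restrictV V (\<lambda>x. 0)"
      using fF F by (auto simp: restrictV_def zero_set_def)
    then have "\<phi> (restrictV V f) = 0" using kc[of 0] by simp
    then show "f a = 0" using ev[of f] fF F(1) by auto
  qed
  then show ?thesis using that F(2) ev by blast
qed

theorem proposition4p2:
  fixes V :: "(real^'n) set" and \<phi> :: "((real^'n) \<Rightarrow> real) \<Rightarrow> real"
  assumes "irreducible_alg V" and "central V" and "singular_variety V"
    and "ring_hom_on V (coord_ring V) \<phi>"
  shows "(\<exists>\<psi>. ring_hom_on V (cont_rational V) \<psi> \<and> (\<forall>f\<in>coord_ring V. \<psi> f = \<phi> f)) \<and>
         (\<forall>\<psi>1 \<psi>2. ring_hom_on V (cont_rational V) \<psi>1 \<and> (\<forall>f\<in>coord_ring V. \<psi>1 f = \<phi> f) \<and>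
                  ring_hom_on V (cont_rational V) \<psi>2 \<and> (\<forall>f\<in>coord_ring V. \<psi>2 f = \<phi> f)
                  \<longrightarrow> (\<forall>f\<in>cont_rational V. \<psi>1 f = \<psi>2 f))"
proof -
  have irr: "irreducible_alg V" by fact
  have alg: "algebraic_set V" using irr irreducible_alg_def by blast
  obtain a where aV: "a \<in> V" and ev: "\<And>p. p \<in> poly_fun \<Longrightarrow> \<phi> (restrictV V p) = p a"
    using point_of_hom[OF alg assms(4)] by blast
  have Vne: "V \<noteq> {}" using aV by blast
  have ex: "ring_hom_on V (cont_rational V) (\<lambda>f. f a) \<and> (\<forall>f\<in>coord_ring V. f a = \<phi> f)"
    using aV ev by (auto simp: ring_hom_on_def coord_ring_def restrictV_def)
  have key: "\<psi> f = f a" if hom: "ring_hom_on V (cont_rational V) \<psi>"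
    and agr: "\<forall>f\<in>coord_ring V. \<psi> f = \<phi> f" and f: "f \<in> cont_rational V" for \<psi> f
  proof (rule ccontr)
    assume ne: "\<psi> f \<noteq> f a"
    define t where "t = \<psi> f"
    have hadd: "\<psi> (\<lambda>x. u x + v x) = \<psi> u + \<psi> v" if "u \<in> cont_rational V" "v \<in> cont_rational V" for u v
      using hom that unfolding ring_hom_on_def by blast
    have hmul: "\<psi> (\<lambda>x. u x * v x) = \<psi> u * \<psi> v" if "u \<in> cont_rational V" "v \<in> cont_rational V" for u v
      using hom that unfolding ring_hom_on_def by blast
    have h1: "\<psi> (restrictV V (\<lambda>x. 1)) = 1" using hom unfolding ring_hom_on_def by blast
    have cpoly: "\<psi> (restrictV V p) = p a" "restrictV V p \<in> cont_rational V" if "p \<in> poly_fun" for p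
      using agr ev[OF that] coord_cr[OF that Vne] that by (auto simp: coord_ring_def)
    define c where "c = restrictV V (\<lambda>x. - t)"
    have cP: "(\<lambda>x::real^'n. - t) \<in> poly_fun" by (rule poly_fun.const)
    define d where "d = (\<lambda>i (x::real^'n). x $ i + - (a $ i))"
    have dP: "d i \<in> poly_fun" for i unfolding d_def by (intro poly_fun.intros)
    define s where "s = (\<lambda>x. \<Sum>i\<in>UNIV. d i x * d i x)"
    have sP: "s \<in> poly_fun" unfolding s_def by (rule poly_sum) (auto intro: poly_fun.mult dP)
    have sa: "s a = 0" by (simp add: s_def d_def)
    have spos: "s x > 0" if xa: "x \<noteq> a" for x
    proof -
      obtain i where "x $ i \<noteq> a $ i" using xa vec_eq_iff by blast
      then have "d i x \<noteq> 0" by (simp add: d_def)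
      then have "d i x * d i x > 0" using not_real_square_gt_zero by blast
      moreover have "s x \<ge> d i x * d i x" unfolding s_def
        by (rule member_le_sum) auto
      ultimately show ?thesis by linarith
    qed
    have snn: "s x \<ge> 0" for x unfolding s_def by (intro sum_nonneg) auto
    define S where "S = restrictV V s"
    define u where "u = (\<lambda>x. f x + c x)"
    have cC: "c \<in> cont_rational V" "\<psi> c = - t" using cpoly[OF cP] by (auto simp: c_def)
    have SC: "S \<in> cont_rational V" "\<psi> S = 0" using cpoly[OF sP] sa by (auto simp: S_def)
    have uC: "u \<in> cont_rational V" "\<psi> u = 0"
      using cr_add[OF irr f cC(1)] hadd[OF f cC(1)] cC(2) by (auto simp: u_def t_def)
    define u2 where "u2 = (\<lambda>x. u x * u x)"
    have u2C: "u2 \<in> cont_rational V" "\<psi> u2 = 0"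
      using cr_mul[OF irr uC(1) uC(1)] hmul[OF uC(1) uC(1)] uC(2) by (auto simp: u2_def)
    define g where "g = (\<lambda>x. u2 x + S x)"
    have gC: "g \<in> cont_rational V" "\<psi> g = 0"
      using cr_add[OF irr u2C(1) SC(1)] hadd[OF u2C(1) SC(1)] u2C(2) SC(2) by (auto simp: g_def)
    have gnz: "g x \<noteq> 0" if "x \<in> V" for x
    proof -
      have gx: "g x = (f x - t) * (f x - t) + s x"
        using that by (simp add: g_def u2_def u_def c_def S_def restrictV_def)
      show ?thesis
      proof (cases "x = a")
        case True
        then have "f x - t \<noteq> 0" using ne by (simp add: t_def)
        then have "(f x - t) * (f x - t) > 0" using not_real_square_gt_zero by blast
        then show ?thesis using gx snn[of x] by linarith
      next
        case False
        have "(f x - t) * (f x - t) \<ge> 0" by simp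
        then show ?thesis using gx spos[OF False] by linarith
      qed
    qed
    define h where "h = (\<lambda>x. if x \<in> V then 1 / g x else 0)"
    have hC: "h \<in> cont_rational V" unfolding h_def by (rule cr_inv[OF gC(1) gnz])
    have gh: "(\<lambda>x. g x * h x) = restrictV V (\<lambda>x. 1)"
      using gnz by (auto simp: h_def restrictV_def)
    have "1 = \<psi> (\<lambda>x. g x * h x)" using h1 gh by simp
    also have "\<dots> = 0" using hmul[OF gC(1) hC] gC(2) by simp
    finally show False by simp
  qed
  show ?thesis
  proof
    show "\<exists>\<psi>. ring_hom_on V (cont_rational V) \<psi> \<and> (\<forall>f\<in>coord_ring V. \<psi> f = \<phi> f)"
      using ex by blast
    show "\<forall>\<psi>1 \<psi>2. ring_hom_on V (cont_rational V) \<psi>1 \<and> (\<forall>f\<in>coord_ring V. \<psi>1 f = \<phi> f) \<and>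
                  ring_hom_on V (cont_rational V) \<psi>2 \<and> (\<forall>f\<in>coord_ring V. \<psi>2 f = \<phi> f)
                  \<longrightarrow> (\<forall>f\<in>cont_rational V. \<psi>1 f = \<psi>2 f)"
    proof (intro allI impI ballI)
      fix \<psi>1 \<psi>2 f
      assume H: "ring_hom_on V (cont_rational V) \<psi>1 \<and> (\<forall>f\<in>coord_ring V. \<psi>1 f = \<phi> f) \<and>
                  ring_hom_on V (cont_rational V) \<psi>2 \<and> (\<forall>f\<in>coord_ring V. \<psi>2 f = \<phi> f)"
        and fC: "f \<in> cont_rational V"
      have "\<psi>1 f = f a" using key[of \<psi>1 f] H fC by blast
      moreover have "\<psi>2 f = f a" using key[of \<psi>2 f] H fC by blast
      ultimately show "\<psi>1 f = \<psi>2 f" by simp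
    qed
  qed
qed

end
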